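(* If $M$ is a restricted Kripke model, $U$ is an atemporal action model over $L_{\mathsf{YDEL}}$, and $W^{M\oplus U}\neq\emptyset$, then $M\oplus U$ is a restricted Kripke model.
   Context: Fix a nonempty finite set $\mathsf{Agt}$ of agents and a nonempty set $\mathsf{Prop}$ of letters. A Kripke model is $M=(W^M,(\to^M_a)_a,\leadsto^M,V^M)$: nonempty $W^M$, binary relations $\to^M_a,\leadsto^M$ ($w'\leadsto w$: $w'$ is a yesterday of $w$), valuation $V^M:\mathsf{Prop}\to\mathcal P(W^M)$. A progression is a finite nonempty $x_0,\dots,x_n$ with $x_i\leadsto x_{i+1}$; a history is one not extendable at its beginning; $\mathrm{depth}(x)$ is the maximal length of a history ending at $x$ ($\infty$ if none). $M$ is restricted if: $w\leadsto w'$ implies $w\in V(p)\iff w'\in V(p)$ (persistence of facts); all depths finite; $w'\leadsto w\to_av$ implies $\exists v'\leadsto v$ (knowledge of the past); $w\to_av$ and no $w'\leadsto w$ imply no $v'\leadsto v$ (knowledge of initial time); $w'\leadsto w$, $w''\leadsto w$ imply $w'=w''$ (uniqueness of the past); $w\leadsto v\to_av'$ implies $\exists w'$ with $w\to_aw'\leadsto v'$ (perfect recall). An action model over a set of formulas $F$ is $U=(W^U,(\to^U_a)_a,\leadsto^U,\mathrm{pre}^U)$ with $W^U$ nonempty finite, binary relations, $\mathrm{pre}^U:W^U\to F$; atemporal means $\leadsto^U=\emptyset$. $L_{\mathsf{YDEL}}$: $\varphi::=p\mid\neg\varphi\mid\varphi\wedge\varphi\mid\Box_a\varphi\mid[Y]\varphi\mid[U,s]\varphi$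 with $(U,s)$ a pointed atemporal action model over $L_{\mathsf{YDEL}}$; the symbol $\flat$ is never a world or event. $\mathsf{YDEL}$ semantics on pointed restricted models: Boolean standard; $M,w\models_{\mathsf{YDEL}}\Box_a\varphi$ iff $\varphi$ holds at all $v$ with $w\to^M_av$; $M,w\models_{\mathsf{YDEL}}[Y]\varphi$ iff $\varphi$ holds at all $v\leadsto^Mw$; $M,w\models_{\mathsf{YDEL}}[U,s]\varphi$ iff $M,w\models_{\mathsf{YDEL}}\mathrm{pre}^U(s)$ implies $M\oplus U,(w,s)\models_{\mathsf{YDEL}}\varphi$, where $W^{M\oplus U}=(W^M\times\{\flat\})\cup\{(v,t)\in W^M\times W^U:M,v\models_{\mathsf{YDEL}}\mathrm{pre}^U(t)\}$; $(v,t)\to_a(v',t')$ iff ($t,t'\ne\flat$, $v\to^M_av'$, $t\to^U_at'$) or ($t=t'=\flat$, $v\to^M_av'$); $(v,t)\leadsto(v',t')$ iff ($t=\flat$, $t'\ne\flat$, $v=v'$) or ($t=t'=\flat$, $v\leadsto^Mv'$); $(v,t)\in V(p)$ iff $v\in V^M(p)$. *)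

theory Defs
  imports "HOL-Library.Extended_Nat"
begin

text \<open>A Kripke model over agents 'ag, letters 'p and worlds 'w.
  The pair (w', w) belongs to Y M iff w' is a yesterday of w (written w' \<leadsto> w).\<close>

record ('ag, 'p, 'w) kmodel =
  W :: "'w set"
  R :: "'ag \<Rightarrow> ('w \<times> 'w) set"
  Y :: "('w \<times> 'w) set"
  V :: "'p \<Rightarrow> 'w set"

definition kripke :: "('ag, 'p, 'w) kmodel \<Rightarrow> bool" where
  "kripke M \<longleftrightarrow> W M \<noteq> {} \<and> (\<forall>a. R M a \<subseteq> W M \<times> W M) \<and> Y M \<subseteq> W M \<times> W M
     \<and> (\<forall>p. V M p \<subseteq> W M)"

definition progression :: "('ag, 'p, 'w) kmodel \<Rightarrow> 'w list \<Rightarrow> bool" where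
  "progression M xs \<longleftrightarrow> xs \<noteq> [] \<and> set xs \<subseteq> W M
     \<and> (\<forall>i. Suc i < length xs \<longrightarrow> (xs ! i, xs ! Suc i) \<in> Y M)"

definition history :: "('ag, 'p, 'w) kmodel \<Rightarrow> 'w list \<Rightarrow> bool" where
  "history M xs \<longleftrightarrow> progression M xs \<and> \<not> (\<exists>w'. (w', hd xs) \<in> Y M)"

definition depth :: "('ag, 'p, 'w) kmodel \<Rightarrow> 'w \<Rightarrow> enat" where
  "depth M x = (let S = {length xs | xs. history M xs \<and> last xs = x} in
     if S \<noteq> {} \<and> finite S then enat (Max S) else \<infinity>)"

definition restricted :: "('ag, 'p, 'w) kmodel \<Rightarrow> bool" where
  "restricted M \<longleftrightarrow> kripke M
   \<and> (\<forall>w w' p. (w, w') \<in> Y M \<longrightarrow> (w \<in> V M p \<longleftrightarrow> w' \<in> V M p))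
   \<and> (\<forall>x \<in> W M. depth M x \<noteq> \<infinity>)
   \<and> (\<forall>w' w v a. (w', w) \<in> Y M \<and> (w, v) \<in> R M a \<longrightarrow> (\<exists>v'. (v', v) \<in> Y M))
   \<and> (\<forall>w v a. (w, v) \<in> R M a \<and> \<not> (\<exists>w'. (w', w) \<in> Y M) \<longrightarrow> \<not> (\<exists>v'. (v', v) \<in> Y M))
   \<and> (\<forall>w' w'' w. (w', w) \<in> Y M \<and> (w'', w) \<in> Y M \<longrightarrow> w' = w'')
   \<and> (\<forall>w v v' a. (w, v) \<in> Y M \<and> (v, v') \<in> R M a \<longrightarrow> (\<exists>w'. (w, w') \<in> R M a \<and> (w', v') \<in> Y M))"

text \<open>An (atemporal) action model has events {0..<length ps}, relations given by the
  first argument, and precondition of event t equal to ps ! t.  The yesterday relation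
  of an atemporal action model is empty, so it is not stored.\<close>

datatype ('ag, 'p) fm =
    Atom 'p
  | Neg "('ag, 'p) fm"
  | Conj "('ag, 'p) fm" "('ag, 'p) fm"
  | Box 'ag "('ag, 'p) fm"
  | Yest "('ag, 'p) fm"
  | Act "('ag, 'p) amodel" nat "('ag, 'p) fm"
and ('ag, 'p) amodel = AModel "'ag \<Rightarrow> (nat \<times> nat) set" "('ag, 'p) fm list"

fun evs :: "('ag, 'p) amodel \<Rightarrow> nat set" where
  "evs (AModel r ps) = {0..<length ps}"

fun arel :: "('ag, 'p) amodel \<Rightarrow> 'ag \<Rightarrow> (nat \<times> nat) set" where
  "arel (AModel r ps) = r"

fun pres :: "('ag, 'p) amodel \<Rightarrow> ('ag, 'p) fm list" where
  "pres (AModel r ps) = ps"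

fun wf_fm :: "('ag, 'p) fm \<Rightarrow> bool"
and wf_am :: "('ag, 'p) amodel \<Rightarrow> bool" where
  "wf_fm (Atom p) = True"
| "wf_fm (Neg f) = wf_fm f"
| "wf_fm (Conj f g) = (wf_fm f \<and> wf_fm g)"
| "wf_fm (Box a f) = wf_fm f"
| "wf_fm (Yest f) = wf_fm f"
| "wf_fm (Act U s f) = (wf_am U \<and> s \<in> evs U \<and> wf_fm f)"
| "wf_am (AModel r ps) = (ps \<noteq> [] \<and> (\<forall>a. r a \<subseteq> {0..<length ps} \<times> {0..<length ps})
      \<and> (\<forall>f \<in> set ps. wf_fm f))"

text \<open>Generic product update; None plays the role of the symbol \<flat>, the events are
  {0..<n}, and P v t says that the precondition of t holds at v.\<close>

definition updW :: "('ag, 'p, 'w) kmodel \<Rightarrow> nat \<Rightarrow> ('w \<Rightarrow> nat \<Rightarrow> bool) \<Rightarrow> ('w \<times> nat option) set" where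
  "updW M n P = (W M \<times> {None}) \<union> {(v, Some t) | v t. v \<in> W M \<and> t < n \<and> P v t}"

definition upd :: "('ag, 'p, 'w) kmodel \<Rightarrow> ('ag \<Rightarrow> (nat \<times> nat) set) \<Rightarrow> nat
    \<Rightarrow> ('w \<Rightarrow> nat \<Rightarrow> bool) \<Rightarrow> ('ag, 'p, 'w \<times> nat option) kmodel" where
  "upd M r n P = \<lparr> W = updW M n P,
     R = (\<lambda>a. {((v, t), (v', t')) | v t v' t'. (v, t) \<in> updW M n P \<and> (v', t') \<in> updW M n P \<and>
            ((\<exists>e e'. t = Some e \<and> t' = Some e' \<and> (v, v') \<in> R M a \<and> (e, e') \<in> r a)
             \<or> (t = None \<and> t' = None \<and> (v, v') \<in> R M a))}),
     Y = {((v, t), (v', t')) | v t v' t'. (v, t) \<in> updW M n P \<and> (v', t') \<in> updW M n P \<and>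
            ((t = None \<and> t' \<noteq> None \<and> v = v') \<or> (t = None \<and> t' = None \<and> (v, v') \<in> Y M))},
     V = (\<lambda>p. {(v, t). (v, t) \<in> updW M n P \<and> v \<in> V M p}) \<rparr>"

definition kmap :: "('w \<Rightarrow> 'u) \<Rightarrow> ('ag, 'p, 'w) kmodel \<Rightarrow> ('ag, 'p, 'u) kmodel" where
  "kmap f M = \<lparr> W = f ` W M, R = (\<lambda>a. map_prod f f ` R M a), Y = map_prod f f ` Y M,
                V = (\<lambda>p. f ` V M p) \<rparr>"

text \<open>To let the semantics live on a single world type, worlds of iterated updates are
  encoded as (x, [t1,...,tk]) instead of nested pairs (((x,t1),...),tk).\<close>

definition updE :: "('ag, 'p, 'w \<times> nat option list) kmodel \<Rightarrow> ('ag \<Rightarrow> (nat \<times> nat) set) \<Rightarrow> nat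
    \<Rightarrow> ('w \<times> nat option list \<Rightarrow> nat \<Rightarrow> bool) \<Rightarrow> ('ag, 'p, 'w \<times> nat option list) kmodel" where
  "updE M r n P = kmap (\<lambda>((x, xs), t). (x, xs @ [t])) (upd M r n P)"

lemma size_nth_le: "i < length ps \<Longrightarrow> size (ps ! i) \<le> size_list size ps"
  by (rule size_list_estimation'[OF nth_mem]) auto

function sat :: "('ag, 'p, 'w \<times> nat option list) kmodel \<Rightarrow> 'w \<times> nat option list
    \<Rightarrow> ('ag, 'p) fm \<Rightarrow> bool" where
  "sat M w (Atom p) = (w \<in> V M p)"
| "sat M w (Neg f) = (\<not> sat M w f)"
| "sat M w (Conj f g) = (sat M w f \<and> sat M w g)"
| "sat M w (Box a f) = (\<forall>v. (w, v) \<in> R M a \<longrightarrow> sat M v f)"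
| "sat M w (Yest f) = (\<forall>v. (v, w) \<in> Y M \<longrightarrow> sat M v f)"
| "sat M w (Act (AModel r ps) s f) =
     (if s < length ps then
        (sat M w (ps ! s) \<longrightarrow>
          sat (updE M r (length ps) (\<lambda>v t. if t < length ps then sat M v (ps ! t) else False))
              (fst w, snd w @ [Some s]) f)
      else True)"
  by pat_completeness auto
termination
  by (relation "measure (\<lambda>(M, w, f). size f)") (auto dest!: size_nth_le)

definition models :: "('ag, 'p, 'w) kmodel \<Rightarrow> 'w \<Rightarrow> ('ag, 'p) fm \<Rightarrow> bool" where
  "models M w f = sat (kmap (\<lambda>w. (w, [])) M) (w, []) f"

definition oplus :: "('ag, 'p, 'w) kmodel \<Rightarrow> ('ag, 'p) amodel \<Rightarrow> ('ag, 'p, 'w \<times> nat option) kmodel" where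
  "oplus M U = upd M (arel U) (length (pres U)) (\<lambda>v t. models M v (pres U ! t))"

end

theory Submission imports Defs begin

lemma prog_snoc:
  "progression M (xs @ [x]) \<longleftrightarrow> (xs = [] \<and> x \<in> W M) \<or> (progression M xs \<and> x \<in> W M \<and> (last xs, x) \<in> Y M)"
proof (cases "xs = []")
  case True then show ?thesis by (auto simp: progression_def)
next
  case False
  show ?thesis
  proof
    assume h: "progression M (xs @ [x])"
    have "(last xs, x) \<in> Y M" using h False
      unfolding progression_def
      by (metis (no_types, lifting) One_nat_def Suc_pred append_is_Nil_conv last_conv_nth length_append_singleton length_greater_0_conv lessI nth_append_length nth_append)
    moreover have "progression M xs"
    proof -
      have "\<forall>i. Suc i < length xs \<longrightarrow> (xs ! i, xs ! Suc i) \<in> Y M"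
      proof (intro allI impI)
        fix i assume i: "Suc i < length xs"
        then have "((xs @ [x]) ! i, (xs @ [x]) ! Suc i) \<in> Y M" using h unfolding progression_def by simp
        then show "(xs ! i, xs ! Suc i) \<in> Y M" using i by (simp add: nth_append)
      qed
      then show ?thesis using h False unfolding progression_def by simp
    qed
    ultimately show "(xs = [] \<and> x \<in> W M) \<or> (progression M xs \<and> x \<in> W M \<and> (last xs, x) \<in> Y M)"
      using h by (auto simp: progression_def)
  next
    assume h: "(xs = [] \<and> x \<in> W M) \<or> (progression M xs \<and> x \<in> W M \<and> (last xs, x) \<in> Y M)"
    then have p: "progression M xs" "x \<in> W M" "(last xs, x) \<in> Y M" using False by auto
    show "progression M (xs @ [x])"
      unfolding progression_def
    proof (intro conjI allI impI)
      fix i assume i: "Suc i < length (xs @ [x])"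
      show "((xs @ [x]) ! i, (xs @ [x]) ! Suc i) \<in> Y M"
      proof (cases "Suc i < length xs")
        case True then show ?thesis using p(1) by (auto simp: nth_append progression_def)
      next
        case F2: False
        then have "Suc i = length xs" using i by simp
        then have "i = length xs - 1" by simp
        then show ?thesis using p(3) False by (simp add: nth_append last_conv_nth)
      qed
    qed (use p in \<open>auto simp: progression_def\<close>)
  qed
qed

lemma hist_unique:
  assumes uniq: "\<forall>w' w'' w. (w', w) \<in> Y M \<and> (w'', w) \<in> Y M \<longrightarrow> w' = w''"
  shows "progression M xs \<Longrightarrow> progression M ys \<Longrightarrow> last xs = last ys
    \<Longrightarrow> \<not> (\<exists>w'. (w', hd xs) \<in> Y M) \<Longrightarrow> \<not> (\<exists>w'. (w', hd ys) \<in> Y M) \<Longrightarrow> xs = ys"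
proof (induction xs arbitrary: ys rule: rev_induct)
  case Nil then show ?case by (simp add: progression_def)
next
  case (snoc x xs)
  from snoc.prems(2) obtain ys' y where ys: "ys = ys' @ [y]"
    by (metis progression_def rev_exhaust)
  have yx: "y = x" using snoc.prems(3) ys by simp
  show ?case
  proof (cases "xs = []")
    case True
    show ?thesis
    proof (cases "ys' = []")
      case True2: True then show ?thesis using True ys yx by simp
    next
      case False
      then have "(last ys', x) \<in> Y M" using snoc.prems(2) ys yx prog_snoc by metis
      then show ?thesis using snoc.prems(4) True by simp
    qed
  next
    case False
    then have px: "progression M xs" "(last xs, x) \<in> Y M" using snoc.prems(1) prog_snoc by metis+
    have "ys' \<noteq> []"
    proof
      assume "ys' = []"
      then show False using snoc.prems(5) ys yx px(2) by simp
    qed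
    then have py: "progression M ys'" "(last ys', x) \<in> Y M" using snoc.prems(2) ys yx prog_snoc by metis+
    have "last xs = last ys'" using uniq px py by blast
    moreover have "\<not> (\<exists>w'. (w', hd xs) \<in> Y M)" using snoc.prems(4) False by simp
    moreover have "\<not> (\<exists>w'. (w', hd ys') \<in> Y M)" using snoc.prems(5) ys \<open>ys' \<noteq> []\<close> by simp
    ultimately have "xs = ys'" using snoc.IH px py by blast
    then show ?thesis using ys yx by simp
  qed
qed

lemma depth_fin_iff:
  assumes uniq: "\<forall>w' w'' w. (w', w) \<in> Y M \<and> (w'', w) \<in> Y M \<longrightarrow> w' = w''"
  shows "depth M x \<noteq> \<infinity> \<longleftrightarrow> (\<exists>hs. history M hs \<and> last hs = x)"
proof
  assume "depth M x \<noteq> \<infinity>"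
  then show "\<exists>hs. history M hs \<and> last hs = x" unfolding depth_def Let_def
    by (auto split: if_splits)
next
  assume "\<exists>hs. history M hs \<and> last hs = x"
  then obtain hs where hs: "history M hs" "last hs = x" by blast
  have "{length xs | xs. history M xs \<and> last xs = x} = {length hs}"
    using hs hist_unique[OF uniq] unfolding history_def by blast
  then show "depth M x \<noteq> \<infinity>" unfolding depth_def by simp
qed

lemma prog_map:
  assumes "progression M xs" "\<And>w. w \<in> W M \<Longrightarrow> f w \<in> W N"
    "\<And>u v. (u, v) \<in> Y M \<Longrightarrow> (f u, f v) \<in> Y N"
  shows "progression N (map f xs)"
  using assms unfolding progression_def by auto


lemma updW_None[simp]: "(v, None) \<in> updW M n P \<longleftrightarrow> v \<in> W M"
  by (auto simp: updW_def)
lemma updW_Some[simp]: "(v, Some t) \<in> updW M n P \<longleftrightarrow> v \<in> W M \<and> t < n \<and> P v t"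
  by (auto simp: updW_def)

lemma upd_W: "W (upd M r n P) = updW M n P" by (simp add: upd_def)
lemma upd_Y: "(x, y) \<in> Y (upd M r n P) \<longleftrightarrow> x \<in> updW M n P \<and> y \<in> updW M n P \<and>
   ((snd x = None \<and> snd y \<noteq> None \<and> fst x = fst y) \<or> (snd x = None \<and> snd y = None \<and> (fst x, fst y) \<in> Y M))"
  by (cases x; cases y) (auto simp: upd_def)
lemma upd_R: "(x, y) \<in> R (upd M r n P) a \<longleftrightarrow> x \<in> updW M n P \<and> y \<in> updW M n P \<and>
   ((\<exists>e e'. snd x = Some e \<and> snd y = Some e' \<and> (fst x, fst y) \<in> R M a \<and> (e, e') \<in> r a)
             \<or> (snd x = None \<and> snd y = None \<and> (fst x, fst y) \<in> R M a))"
  by (cases x; cases y) (auto simp: upd_def)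
lemma upd_V: "x \<in> V (upd M r n P) p \<longleftrightarrow> x \<in> updW M n P \<and> fst x \<in> V M p"
  by (cases x) (auto simp: upd_def)

lemma upd_restricted:
  assumes rM: "restricted M" and ne: "W (upd M r n P) \<noteq> {}"
  shows "restricted (upd M r n P)"
proof -
  let ?N = "upd M r n P"
  have kM: "kripke M" and pers: "\<forall>w w' p. (w, w') \<in> Y M \<longrightarrow> (w \<in> V M p \<longleftrightarrow> w' \<in> V M p)"
   and dM: "\<forall>x \<in> W M. depth M x \<noteq> \<infinity>"
   and kp: "\<forall>w' w v a. (w', w) \<in> Y M \<and> (w, v) \<in> R M a \<longrightarrow> (\<exists>v'. (v', v) \<in> Y M)"
   and ki: "\<forall>w v a. (w, v) \<in> R M a \<and> \<not> (\<exists>w'. (w', w) \<in> Y M) \<longrightarrow> \<not> (\<exists>v'. (v', v) \<in> Y M)"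
   and un: "\<forall>w' w'' w. (w', w) \<in> Y M \<and> (w'', w) \<in> Y M \<longrightarrow> w' = w''"
   and pr: "\<forall>w v v' a. (w, v) \<in> Y M \<and> (v, v') \<in> R M a \<longrightarrow> (\<exists>w'. (w, w') \<in> R M a \<and> (w', v') \<in> Y M)"
    using rM unfolding restricted_def by blast+
  have YW: "(u, v) \<in> Y M \<Longrightarrow> u \<in> W M \<and> v \<in> W M" for u v using kM unfolding kripke_def by blast
  have RW: "(u, v) \<in> R M a \<Longrightarrow> u \<in> W M \<and> v \<in> W M" for u v a using kM unfolding kripke_def by blast
  have kN: "kripke ?N"
    using ne unfolding kripke_def by (auto simp: upd_W upd_Y upd_R upd_V)
  have persN: "\<forall>w w' p. (w, w') \<in> Y ?N \<longrightarrow> (w \<in> V ?N p \<longleftrightarrow> w' \<in> V ?N p)"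
    using pers by (auto simp: upd_Y upd_V)
  have unN: "\<forall>w' w'' w. (w', w) \<in> Y ?N \<and> (w'', w) \<in> Y ?N \<longrightarrow> w' = w''"
  proof (intro allI impI)
    fix w' w'' w assume h: "(w', w) \<in> Y ?N \<and> (w'', w) \<in> Y ?N"
    obtain a1 b1 a2 b2 a b where e: "w' = (a1, b1)" "w'' = (a2, b2)" "w = (a, b)" by (cases w'; cases w''; cases w) auto
    show "w' = w''" using h un unfolding e by (cases b) (auto simp: upd_Y)
  qed
  have kpN: "\<forall>w' w v a. (w', w) \<in> Y ?N \<and> (w, v) \<in> R ?N a \<longrightarrow> (\<exists>v'. (v', v) \<in> Y ?N)"
  proof (intro allI impI)
    fix w' w v a assume h: "(w', w) \<in> Y ?N \<and> (w, v) \<in> R ?N a"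
    obtain x1 t1 x t y s where e: "w' = (x1, t1)" "w = (x, t)" "v = (y, s)" by (cases w'; cases w; cases v) auto
    show "\<exists>v'. (v', v) \<in> Y ?N"
    proof (cases t)
      case None
      then have "t1 = None" "(x1, x) \<in> Y M" "s = None" "(x, y) \<in> R M a" using h e by (auto simp: upd_Y upd_R)
      then obtain y' where "(y', y) \<in> Y M" using kp by blast
      then show ?thesis using YW e \<open>s = None\<close> by (intro exI[of _ "(y', None)"]) (auto simp: upd_Y)
    next
      case (Some e1)
      then obtain e2 where "s = Some e2" "(x, y) \<in> R M a" "v \<in> updW M n P" using h e by (auto simp: upd_Y upd_R)
      then show ?thesis using RW e by (intro exI[of _ "(y, None)"]) (auto simp: upd_Y)
    qed
  qed
  have kiN: "\<forall>w v a. (w, v) \<in> R ?N a \<and> \<not> (\<exists>w'. (w', w) \<in> Y ?N) \<longrightarrow> \<not> (\<exists>v'. (v', v) \<in> Y ?N)"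
  proof (intro allI impI)
    fix w v a assume h: "(w, v) \<in> R ?N a \<and> \<not> (\<exists>w'. (w', w) \<in> Y ?N)"
    obtain x t y s where e: "w = (x, t)" "v = (y, s)" by (cases w; cases v) auto
    have t: "t = None"
    proof (rule ccontr)
      assume "t \<noteq> None"
      then have "((x, None), w) \<in> Y ?N" using h e by (auto simp: upd_Y upd_R)
      then show False using h by blast
    qed
    then have s: "s = None" and xy: "(x, y) \<in> R M a" using h e by (auto simp: upd_R)
    have "\<not> (\<exists>x'. (x', x) \<in> Y M)"
    proof
      assume "\<exists>x'. (x', x) \<in> Y M"
      then obtain x' where "(x', x) \<in> Y M" by blast
      then have "((x', None), w) \<in> Y ?N" using YW e t by (auto simp: upd_Y)
      then show False using h by blast
    qed
    then have "\<not> (\<exists>y'. (y', y) \<in> Y M)" using ki xy by blast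
    then show "\<not> (\<exists>v'. (v', v) \<in> Y ?N)" using e s by (auto simp: upd_Y)
  qed
  have prN: "\<forall>w v v' a. (w, v) \<in> Y ?N \<and> (v, v') \<in> R ?N a \<longrightarrow> (\<exists>w'. (w, w') \<in> R ?N a \<and> (w', v') \<in> Y ?N)"
  proof (intro allI impI)
    fix w v v' a assume h: "(w, v) \<in> Y ?N \<and> (v, v') \<in> R ?N a"
    obtain x t y s z u where e: "w = (x, t)" "v = (y, s)" "v' = (z, u)" by (cases w; cases v; cases v') auto
    show "\<exists>w'. (w, w') \<in> R ?N a \<and> (w', v') \<in> Y ?N"
    proof (cases s)
      case None
      then have "t = None" "(x, y) \<in> Y M" "u = None" "(y, z) \<in> R M a" using h e by (auto simp: upd_Y upd_R)
      then obtain x' where "(x, x') \<in> R M a" "(x', z) \<in> Y M" using pr by blast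
      then show ?thesis using YW RW e \<open>t = None\<close> \<open>u = None\<close>
        by (intro exI[of _ "(x', None)"]) (auto simp: upd_Y upd_R)
    next
      case (Some e1)
      then have "t = None" "x = y" "(y, z) \<in> R M a" "v' \<in> updW M n P" "u \<noteq> None" using h e by (auto simp: upd_Y upd_R)
      then show ?thesis using RW e
        by (intro exI[of _ "(z, None)"]) (auto simp: upd_Y upd_R)
    qed
  qed
  have dN: "\<forall>x \<in> W ?N. depth ?N x \<noteq> \<infinity>"
  proof
    fix w assume wN: "w \<in> W ?N"
    obtain v t where e: "w = (v, t)" by (cases w) auto
    have vW: "v \<in> W M" using wN e by (cases t) (auto simp: upd_W)
    then obtain hs where hs: "history M hs" "last hs = v" using dM depth_fin_iff[OF un] by blast
    let ?f = "\<lambda>w. (w, None :: nat option)"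
    have hne: "hs \<noteq> []" using hs by (simp add: history_def progression_def)
    have p1: "progression ?N (map ?f hs)"
      using hs(1) unfolding history_def
      by (intro prog_map) (auto simp: upd_W upd_Y dest: YW)
    have nop: "\<not> (\<exists>w'. (w', hd (map ?f hs)) \<in> Y ?N)"
      using hs(1) hne unfolding history_def by (auto simp: upd_Y hd_map)
    have "\<exists>gs. history ?N gs \<and> last gs = w"
    proof (cases t)
      case None
      then show ?thesis using p1 nop hs(2) hne e unfolding history_def
        by (intro exI[of _ "map ?f hs"]) (simp add: last_map)
    next
      case (Some e1)
      have ed: "(last (map ?f hs), w) \<in> Y ?N" using hs(2) hne e Some wN vW
        by (simp add: last_map upd_Y upd_W)
      have "progression ?N (map ?f hs @ [w])"
        using prog_snoc[of ?N "map ?f hs" w] p1 ed wN by simp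
      moreover have "hd (map ?f hs @ [w]) = hd (map ?f hs)" using hne by simp
      ultimately show ?thesis using nop unfolding history_def
        by (intro exI[of _ "map ?f hs @ [w]"]) simp
    qed
    then show "depth ?N w \<noteq> \<infinity>" using depth_fin_iff[OF unN] by blast
  qed
  show ?thesis unfolding restricted_def
    using kN persN dN kpN kiN unN prN by blast
qed

theorem corollary32:
  fixes M :: "('ag :: finite, 'p, 'w) kmodel" and U :: "('ag, 'p) amodel"
  assumes "restricted M"
    and "wf_am U"
    and "W (oplus M U) \<noteq> {}"
  shows "restricted (oplus M U)"
  using assms(1,3) unfolding oplus_def by (rule upd_restricted)

end
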